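(* Let $f(X)=a_kX^k+\cdots+a_0\in\mathbb{Z}[X]$ be a nonconstant polynomial of degree $k\ge1$ with roots $\alpha_1,\dots,\alpha_k$ (with multiplicity) in an algebraic closure of $\mathbb{Q}$, and define $$\widetilde{f}(X):=a_k^{2k-2}\prod_{\substack{1\leq i,j\leq k\\ i\neq j}}\bigl(X-(\alpha_i-\alpha_j)\bigr).$$ Then $f$ and $\widetilde{f}$ have the same Galois group over $\mathbb{Q}$. *)

theory Defs
  imports "HOL-Algebra.Group" "HOL-Computational_Algebra.Polynomial"
begin

text \<open>We work inside the complex numbers, which contain an algebraic closure of Q.\<close>

definition is_subfield_C :: "complex set \<Rightarrow> bool" where
  "is_subfield_C K \<longleftrightarrow> 0 \<in> K \<and> 1 \<in> K \<and>
     (\<forall>x\<in>K. \<forall>y\<in>K. x + y \<in> K \<and> x * y \<in> K) \<and>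
     (\<forall>x\<in>K. - x \<in> K \<and> inverse x \<in> K)"

definition splitting_field_C :: "complex poly \<Rightarrow> complex set" where
  "splitting_field_C p = \<Inter>{K. is_subfield_C K \<and> {z. poly p z = 0} \<subseteq> K}"

text \<open>Galois group over Q of p: the field automorphisms of its splitting field K
  fixing Q pointwise (extended by the identity outside K, so that they are
  uniquely represented as functions on C), under composition.\<close>

definition galois_group_C :: "complex poly \<Rightarrow> (complex \<Rightarrow> complex) monoid" where
  "galois_group_C p =
     (let K = splitting_field_C p in
      \<lparr> carrier = {\<sigma>. bij_betw \<sigma> K K
                     \<and> (\<forall>x\<in>K. \<forall>y\<in>K. \<sigma> (x + y) = \<sigma> x + \<sigma> y \<and> \<sigma> (x * y) = \<sigma> x * \<sigma> y)
                     \<and> (\<forall>q\<in>\<rat>. \<sigma> q = q)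
                     \<and> (\<forall>x. x \<notin> K \<longrightarrow> \<sigma> x = x)},
        monoid.mult = (\<lambda>\<sigma> \<tau>. \<sigma> \<circ> \<tau>),
        monoid.one = id \<rparr>)"

end

theory Submission
  imports Defs
begin

lemma coeff_lin_mult: "coeff ([:-a,1:] * (p::'a::comm_ring_1 poly)) n = - a * coeff p n + (if n = 0 then 0 else coeff p (n - 1))"
  by (cases n) (simp_all add: mult_pCons_left coeff_pCons)

lemma coeffs_lin:
  fixes xs :: "'a::comm_ring_1 list"
  shows "coeff (\<Prod>a\<leftarrow>xs. [:-a,1:]) (length xs) = 1 \<and>
   (\<forall>n>length xs. coeff (\<Prod>a\<leftarrow>xs. [:-a,1:]) n = 0) \<and>
   (xs \<noteq> [] \<longrightarrow> coeff (\<Prod>a\<leftarrow>xs. [:-a,1:]) (length xs - 1) = - sum_list xs)"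
proof (induction xs)
  case Nil
  then show ?case by (auto simp: coeff_1)
next
  case (Cons a xs)
  let ?P = "\<Prod>a\<leftarrow>xs. [:-a,1:]"
  have e: "(\<Prod>a\<leftarrow>a#xs. [:-a,1:]) = [:-a,1:] * ?P" by simp
  show ?case
  proof (intro conjI allI impI)
    show "coeff (\<Prod>a\<leftarrow>a#xs. [:-a,1:]) (length (a#xs)) = 1"
      unfolding e coeff_lin_mult using Cons by simp
    fix n assume "n > length (a#xs)"
    then show "coeff (\<Prod>a\<leftarrow>a#xs. [:-a,1:]) n = 0"
      unfolding e coeff_lin_mult using Cons by simp
  next
    show "coeff (\<Prod>a\<leftarrow>a#xs. [:-a,1:]) (length (a#xs) - 1) = - sum_list (a#xs)"
    proof (cases xs)
      case Nil then show ?thesis by simp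
    next
      case (Cons b ys)
      then show ?thesis unfolding e coeff_lin_mult using Cons.IH by (auto simp: algebra_simps)
    qed
  qed
qed

lemma subfield_int: assumes "is_subfield_C K" shows "of_int m \<in> K"
proof -
  have n: "of_nat n \<in> K" for n
    by (induction n) (use assms in \<open>auto simp: is_subfield_C_def\<close>)
  show ?thesis
  proof (cases "m \<ge> 0")
    case True then show ?thesis using n[of "nat m"] by simp
  next
    case False then show ?thesis using n[of "nat (-m)"] assms
      by (auto simp: is_subfield_C_def)
  qed
qed

lemma subfield_rat: assumes "is_subfield_C K" "x \<in> \<rat>" shows "x \<in> K"
proof -
  obtain a b where "x = of_int a / of_int b" using assms(2) Rats_cases' by metis
  then show ?thesis using subfield_int[OF assms(1)] assms(1)
    by (simp add: divide_inverse is_subfield_C_def)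
qed

lemma subfield_sum: assumes "is_subfield_C K" "\<And>i. i \<in> A \<Longrightarrow> g i \<in> K" shows "sum g A \<in> K"
  using assms(2)
proof (induction A rule: infinite_finite_induct)
  case (infinite A) then show ?case using assms(1) by (simp add: is_subfield_C_def)
next
  case empty then show ?case using assms(1) by (simp add: is_subfield_C_def)
next
  case (insert x F) then show ?case using assms(1) by (simp add: is_subfield_C_def)
qed

lemma split_eq:
  assumes "\<And>K. is_subfield_C K \<Longrightarrow> ({z. poly p z = 0} \<subseteq> K \<longleftrightarrow> {z. poly q z = 0} \<subseteq> K)"
  shows "galois_group_C p = galois_group_C q"
proof -
  have "splitting_field_C p = splitting_field_C q"
    unfolding splitting_field_C_def using assms by metis
  then show ?thesis unfolding galois_group_C_def by simp
qed

lemma poly_prod_list_map: "poly (prod_list (map g xs)) z = prod_list (map (\<lambda>x. poly (g x) z) xs)"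
  by (induction xs) auto

lemma deg_map_int: "degree (map_poly (of_int :: int \<Rightarrow> complex) f) = degree f"
  by (rule degree_map_poly) simp

theorem lemma2p1:
  fixes f :: "int poly" and \<alpha> :: "complex list"
  assumes "degree f \<ge> 1"
    and "map_poly of_int f = smult (of_int (lead_coeff f)) (\<Prod>a\<leftarrow>\<alpha>. [:- a, 1:])"
  shows "galois_group_C (map_poly of_int f) \<cong>
         galois_group_C (smult (of_int (lead_coeff f) ^ (2 * length \<alpha> - 2))
            (\<Prod>i<length \<alpha>. \<Prod>j\<in>{j. j < length \<alpha> \<and> j \<noteq> i}. [:- (\<alpha> ! i - \<alpha> ! j), 1:]))"
proof -
  define n where "n = length \<alpha>"
  define C :: complex where "C = of_int (lead_coeff f)"
  have f0: "f \<noteq> 0" using assms(1) by auto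
  have C0: "C \<noteq> 0" using f0 by (simp add: C_def)
  have n0: "n \<noteq> 0"
  proof
    assume "n = 0"
    then have "\<alpha> = []" by (simp add: n_def)
    then have "map_poly of_int f = [:C:]" using assms(2) by (simp add: C_def)
    then have "degree (map_poly (of_int :: int \<Rightarrow> complex) f) = 0" by simp
    then show False using assms(1) deg_map_int by simp
  qed
  have cl: "coeff (\<Prod>a\<leftarrow>\<alpha>. [:-a,1:]) (n - 1) = - sum_list \<alpha>"
    using coeffs_lin[of \<alpha>] n0 by (auto simp: n_def)
  have "of_int (coeff f (n - 1)) = coeff (map_poly (of_int :: int \<Rightarrow> complex) f) (n - 1)"
    by (simp add: coeff_map_poly)
  also have "\<dots> = C * (- sum_list \<alpha>)" using assms(2) cl by (simp add: C_def)
  finally have "sum_list \<alpha> = - of_int (coeff f (n - 1)) / C" using C0 by (simp add: field_simps)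
  then have sQ: "sum_list \<alpha> \<in> \<rat>" by (simp add: C_def)
  have rootsF: "{z. poly (map_poly of_int f) z = 0} = set \<alpha>"
    using C0 unfolding assms(2) by (auto simp: poly_prod_list_map prod_list_zero_iff C_def)
  have rootsG: "{z. poly (smult (of_int (lead_coeff f) ^ (2 * length \<alpha> - 2))
            (\<Prod>i<length \<alpha>. \<Prod>j\<in>{j. j < length \<alpha> \<and> j \<noteq> i}. [:- (\<alpha> ! i - \<alpha> ! j), 1:])) z = 0}
     = {z. \<exists>i<n. \<exists>j<n. j \<noteq> i \<and> z = \<alpha> ! i - \<alpha> ! j}"
    using C0 apply (auto simp: poly_prod C_def n_def)
    apply (metis add.commute add_diff_cancel_left diff_add_cancel eq_neg_iff_add_eq_0 minus_diff_eq)
    apply (force simp: algebra_simps)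
    done
  show ?thesis
  proof (subst split_eq)
    fix K assume K: "is_subfield_C K"
    have addK: "x \<in> K \<Longrightarrow> y \<in> K \<Longrightarrow> x - y \<in> K" for x y
      using K unfolding is_subfield_C_def by (metis diff_conv_add_uminus)
    show "{z. poly (map_poly of_int f) z = 0} \<subseteq> K \<longleftrightarrow> {z. poly (smult (of_int (lead_coeff f) ^ (2 * length \<alpha> - 2))
            (\<Prod>i<length \<alpha>. \<Prod>j\<in>{j. j < length \<alpha> \<and> j \<noteq> i}. [:- (\<alpha> ! i - \<alpha> ! j), 1:])) z = 0} \<subseteq> K"
      unfolding rootsF rootsG
    proof
      assume "set \<alpha> \<subseteq> K"
      then show "{z. \<exists>i<n. \<exists>j<n. j \<noteq> i \<and> z = \<alpha> ! i - \<alpha> ! j} \<subseteq> K"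
        using addK by (auto simp: n_def) (meson nth_mem subsetD)
    next
      assume D: "{z. \<exists>i<n. \<exists>j<n. j \<noteq> i \<and> z = \<alpha> ! i - \<alpha> ! j} \<subseteq> K"
      have d: "\<alpha> ! i - \<alpha> ! j \<in> K" if "i < n" "j < n" for i j
        using D that K by (cases "i = j") (auto simp: is_subfield_C_def)
      have ai: "\<alpha> ! i \<in> K" if i: "i < n" for i
      proof -
        have "(\<Sum>j<n. \<alpha> ! i - \<alpha> ! j) = of_nat n * \<alpha> ! i - sum_list \<alpha>"
          by (simp add: sum_subtractf sum_list_sum_nth n_def atLeast0LessThan)
        then have "\<alpha> ! i = ((\<Sum>j<n. \<alpha> ! i - \<alpha> ! j) + sum_list \<alpha>) * inverse (of_nat n)"
          using n0 by (simp add: field_simps)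
        moreover have "(\<Sum>j<n. \<alpha> ! i - \<alpha> ! j) \<in> K" by (rule subfield_sum[OF K]) (use d i in auto)
        moreover have "sum_list \<alpha> \<in> K" using subfield_rat[OF K sQ] .
        moreover have "inverse (of_nat n) \<in> K" using subfield_rat[OF K, of "inverse (of_nat n)"] by simp
        ultimately show ?thesis using K unfolding is_subfield_C_def by metis
      qed
      show "set \<alpha> \<subseteq> K" using ai by (auto simp: in_set_conv_nth n_def)
    qed
  qed simp
qed

end
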